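(* Let $G_N=(V,E)$ be a connected, undirected, edge-weighted graph on $N$ nodes, $u\in V$ an initial mutant node, and $r\ge 1$. Then one of the following holds: (1) $\gamma^{\mathrm{Bd}}_r(G_N,u)<\gamma^{\mathrm{Bd}}_r(K_N)$; (2) $\gamma^{\mathrm{dB}}_r(G_N,u)<\gamma^{\mathrm{dB}}_r(K_N)$; (3) $\gamma^{\mathrm{Bd}}_r(G_N,u)=\gamma^{\mathrm{Bd}}_r(K_N)$ and $\gamma^{\mathrm{dB}}_r(G_N,u)=\gamma^{\mathrm{dB}}_r(K_N)$.
   Context: Each edge $\{u,v\}$ has a positive weight $w(u,v)$ and $\deg(u)=\sum_{v} w(u,v)$. Each node is occupied by a resident (fitness 1) or a mutant (fitness $r\ge 1$); $f(u)$ is the fitness at $u$ and $F=\sum_u f(u)$. Moran Birth-death (Bd) process: each step a node $u$ is chosen with probability $f(u)/F$ and its offspring replaces a neighbor $v$ chosen with probability $w(u,v)/\deg(u)$. Moran death-Birth (dB) process: each step a uniformly random node $v$ dies and is replaced by the offspring of a neighbor $u$ chosen with probability $f(u)w(u,v)/\sum_{u'}f(u')w(u',v)$. For a process $p\in\{\mathrm{Bd},\mathrm{dB}\}$, $\gamma^{p}_r(G_N,u)$ is the probability that, starting with a single mutant at $u$ (all other nodes residents), the first step that changes the set of mutant nodes is one in which the mutant at $u$ places its offspring onto a neighboring node (increasing the number of mutants), as opposed to the mutant at $u$ being replaced by a resident. $K_N$ is the unweighted complete graph on $N$ nodes; $\gamma^p_r(K_N)$ is this quantity on $K_N$ (independent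 of the node). *)

theory Defs
  imports Main Complex_Main
begin

text \<open>A weighted undirected graph is given by a finite vertex set V and a
weight function w; w x y > 0 means that {x,y} is an edge with weight w x y.\<close>

definition wgraph :: "'a set \<Rightarrow> ('a \<Rightarrow> 'a \<Rightarrow> real) \<Rightarrow> bool" where
  "wgraph V w \<longleftrightarrow> finite V
     \<and> (\<forall>x y. w x y = w y x)
     \<and> (\<forall>x y. 0 \<le> w x y)
     \<and> (\<forall>x. w x x = 0)
     \<and> (\<forall>x y. w x y > 0 \<longrightarrow> x \<in> V \<and> y \<in> V)"

definition connected_wgraph :: "'a set \<Rightarrow> ('a \<Rightarrow> 'a \<Rightarrow> real) \<Rightarrow> bool" where
  "connected_wgraph V w \<longleftrightarrow>
     (\<forall>x\<in>V. \<forall>y\<in>V. (x, y) \<in> {(a, b). w a b > 0}\<^sup>*)"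

definition complete_w :: "'a set \<Rightarrow> 'a \<Rightarrow> 'a \<Rightarrow> real" where
  "complete_w V x y = (if x \<in> V \<and> y \<in> V \<and> x \<noteq> y then 1 else 0)"

definition wdeg :: "'a set \<Rightarrow> ('a \<Rightarrow> 'a \<Rightarrow> real) \<Rightarrow> 'a \<Rightarrow> real" where
  "wdeg V w x = (\<Sum>y\<in>V. w x y)"

definition fit :: "'a set \<Rightarrow> real \<Rightarrow> 'a \<Rightarrow> real" where
  "fit S r x = (if x \<in> S then r else 1)"

text \<open>One step of the Birth-death process: probability that node x is chosen to
reproduce and its offspring replaces node y (mutant set S).\<close>
definition Bd_rep :: "'a set \<Rightarrow> ('a \<Rightarrow> 'a \<Rightarrow> real) \<Rightarrow> 'a set \<Rightarrow> real \<Rightarrow> 'a \<Rightarrow> 'a \<Rightarrow> real" where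
  "Bd_rep V w S r x y =
     fit S r x / (\<Sum>z\<in>V. fit S r z) * (w x y / wdeg V w x)"

text \<open>One step of the death-Birth process: probability that node y dies and is
replaced by the offspring of node x (mutant set S).\<close>
definition dB_rep :: "'a set \<Rightarrow> ('a \<Rightarrow> 'a \<Rightarrow> real) \<Rightarrow> 'a set \<Rightarrow> real \<Rightarrow> 'a \<Rightarrow> 'a \<Rightarrow> real" where
  "dB_rep V w S r x y =
     1 / real (card V) * (fit S r x * w x y / (\<Sum>z\<in>V. fit S r z * w z y))"

text \<open>Starting from the single mutant at u, the first step changing the mutant set
is either the mutant at u placing offspring on a (resident) neighbour (total
per-step probability inc) or a resident replacing the mutant at u (total per-step
probability dec); all other steps leave the state unchanged.  Hence the
probability that the first changing step is an increase is inc / (inc + dec).\<close>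
definition gamma :: "('a set \<Rightarrow> ('a \<Rightarrow> 'a \<Rightarrow> real) \<Rightarrow> 'a set \<Rightarrow> real \<Rightarrow> 'a \<Rightarrow> 'a \<Rightarrow> real)
    \<Rightarrow> 'a set \<Rightarrow> ('a \<Rightarrow> 'a \<Rightarrow> real) \<Rightarrow> real \<Rightarrow> 'a \<Rightarrow> real" where
  "gamma rep V w r u =
     (let inc = (\<Sum>v\<in>V - {u}. rep V w {u} r u v);
          dec = (\<Sum>v\<in>V - {u}. rep V w {u} r v u)
      in inc / (inc + dec))"

abbreviation gamma_Bd where "gamma_Bd \<equiv> gamma Bd_rep"
abbreviation gamma_dB where "gamma_dB \<equiv> gamma dB_rep"

end

theory Submission
  imports Defs
begin

lemma wg_sym: "wgraph V w \<Longrightarrow> w x y = w y x" by (simp add: wgraph_def)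
lemma wg_nn: "wgraph V w \<Longrightarrow> 0 \<le> w x y" by (simp add: wgraph_def)
lemma wg_diag: "wgraph V w \<Longrightarrow> w x x = 0" by (simp add: wgraph_def)
lemma wg_fin: "wgraph V w \<Longrightarrow> finite V" by (simp add: wgraph_def)
lemma wg_in: "wgraph V w \<Longrightarrow> w x y > 0 \<Longrightarrow> x \<in> V \<and> y \<in> V" unfolding wgraph_def by blast

lemma deg_rm:
  assumes "wgraph V w" "u \<in> V"
  shows "wdeg V w u = (\<Sum>v\<in>V-{u}. w u v)"
proof -
  have "wdeg V w u = w u u + (\<Sum>v\<in>V-{u}. w u v)"
    unfolding wdeg_def using sum.remove[OF wg_fin[OF assms(1)] assms(2)] by simp
  thus ?thesis using wg_diag[OF assms(1)] by simp
qed

lemma deg_ge: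
  assumes "wgraph V w" "v \<in> V"
  shows "w u v \<le> wdeg V w v"
proof (cases "w u v > 0")
  case True
  then have "u \<in> V" using wg_in[OF assms(1)] by blast
  then have "w v u \<le> wdeg V w v" unfolding wdeg_def
    by (rule member_le_sum) (use wg_nn[OF assms(1)] wg_fin[OF assms(1)] in auto)
  then show ?thesis using wg_sym[OF assms(1)] by metis
next
  case False
  then have "w u v = 0" using wg_nn[OF assms(1), of u v] by simp
  moreover have "0 \<le> wdeg V w v" unfolding wdeg_def by (rule sum_nonneg) (simp add: wg_nn[OF assms(1)])
  ultimately show ?thesis by simp
qed

lemma fit_sum:
  assumes "finite V" "u \<in> V"
  shows "(\<Sum>z\<in>V. fit {u} r z) = r + (real (card V) - 1)"
proof -
  have "(\<Sum>z\<in>V. fit {u} r z) = fit {u} r u + (\<Sum>z\<in>V-{u}. fit {u} r z)"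
    using sum.remove[OF assms] by blast
  also have "(\<Sum>z\<in>V-{u}. fit {u} r z) = (\<Sum>z\<in>V-{u}. 1)"
    by (rule sum.cong) (auto simp: fit_def)
  moreover have "card V \<ge> 1" using assms by (simp add: Suc_le_eq card_gt_0_iff) blast
  ultimately show ?thesis using assms by (simp add: fit_def of_nat_diff)
qed

lemma Bd_form:
  assumes g: "wgraph V w" and u: "u \<in> V" and d: "wdeg V w u > 0" and r: "r \<ge> 1"
  shows "gamma_Bd V w r u = r / (r + (\<Sum>v\<in>V-{u}. w u v / wdeg V w v))"
proof -
  define F where "F = (\<Sum>z\<in>V. fit {u} r z)"
  define A where "A = (\<Sum>v\<in>V-{u}. w u v / wdeg V w v)"
  have fin: "finite V" using wg_fin[OF g] .
  have cV: "card V \<ge> 1" using fin u by (simp add: Suc_le_eq card_gt_0_iff) blast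
  have F: "F > 0" unfolding F_def using fit_sum[OF fin u, of r] r cV by simp
  have inc: "(\<Sum>v\<in>V-{u}. Bd_rep V w {u} r u v) = r / F"
  proof -
    have "(\<Sum>v\<in>V-{u}. Bd_rep V w {u} r u v) = (\<Sum>v\<in>V-{u}. r / F / wdeg V w u * w u v)"
      by (rule sum.cong) (auto simp: Bd_rep_def fit_def F_def)
    also have "\<dots> = r / F / wdeg V w u * (\<Sum>v\<in>V-{u}. w u v)"
      by (rule sum_distrib_left[symmetric])
    also have "\<dots> = r / F / wdeg V w u * wdeg V w u"
      by (simp add: deg_rm[OF g u])
    finally show ?thesis using d by simp
  qed
  have dec: "(\<Sum>v\<in>V-{u}. Bd_rep V w {u} r v u) = A / F"
  proof -
    have "(\<Sum>v\<in>V-{u}. Bd_rep V w {u} r v u) = (\<Sum>v\<in>V-{u}. (w u v / wdeg V w v) / F)"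
      by (rule sum.cong) (auto simp: Bd_rep_def fit_def F_def wg_sym[OF g, of _ u])
    then show ?thesis by (simp add: A_def sum_divide_distrib)
  qed
  have "gamma_Bd V w r u = (r/F) / (r/F + A/F)"
    unfolding gamma_def Let_def inc dec by simp
  also have "\<dots> = r / (r + A)" using F by (simp add: field_simps add_divide_distrib[symmetric])
  finally show ?thesis unfolding A_def .
qed

definition ff :: "real \<Rightarrow> real \<Rightarrow> real" where
  "ff r x = r * x / (1 + (r - 1) * x)"

lemma dB_den:
  assumes g: "wgraph V w" and u: "u \<in> V" and v: "v \<in> V"
  shows "(\<Sum>z\<in>V. fit {u} r z * w z v) = (r - 1) * w u v + wdeg V w v"
proof -
  have fin: "finite V" using wg_fin[OF g] .
  have "(\<Sum>z\<in>V. fit {u} r z * w z v) = r * w u v + (\<Sum>z\<in>V-{u}. fit {u} r z * w z v)"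
    using sum.remove[OF fin u, of "\<lambda>z. fit {u} r z * w z v"] by (simp add: fit_def)
  also have "(\<Sum>z\<in>V-{u}. fit {u} r z * w z v) = (\<Sum>z\<in>V-{u}. w v z)"
    by (rule sum.cong) (auto simp: fit_def wg_sym[OF g, of _ v])
  also have "wdeg V w v = w v u + (\<Sum>z\<in>V-{u}. w v z)"
    unfolding wdeg_def using sum.remove[OF fin u] by blast
  ultimately show ?thesis using wg_sym[OF g, of u v] by (simp add: algebra_simps)
qed

lemma dB_form:
  assumes g: "wgraph V w" and u: "u \<in> V" and d: "wdeg V w u > 0" and r: "r \<ge> 1"
  shows "gamma_dB V w r u = (\<Sum>v\<in>V-{u}. ff r (w u v / wdeg V w v)) /
            ((\<Sum>v\<in>V-{u}. ff r (w u v / wdeg V w v)) + 1)"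
proof -
  define N where "N = real (card V)"
  define B where "B = (\<Sum>v\<in>V-{u}. ff r (w u v / wdeg V w v))"
  have fin: "finite V" using wg_fin[OF g] .
  have N: "N > 0" unfolding N_def using fin u by (simp add: card_gt_0_iff) blast
  have inc: "(\<Sum>v\<in>V-{u}. dB_rep V w {u} r u v) = B / N"
  proof -
    have "(\<Sum>v\<in>V-{u}. dB_rep V w {u} r u v) = (\<Sum>v\<in>V-{u}. ff r (w u v / wdeg V w v) / N)"
    proof (rule sum.cong)
      fix v assume vV: "v \<in> V-{u}"
      have e: "dB_rep V w {u} r u v = 1 / N * (r * w u v / ((r - 1) * w u v + wdeg V w v))"
        using vV dB_den[OF g u, of v r] unfolding dB_rep_def N_def by (simp add: fit_def)
      show "dB_rep V w {u} r u v = ff r (w u v / wdeg V w v) / N"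
      proof (cases "w u v = 0")
        case True then show ?thesis using e by (simp add: ff_def)
      next
        case False
        then have "w u v > 0" using wg_nn[OF g, of u v] by simp
        then have "wdeg V w v > 0" using deg_ge[OF g, of v u] vV by simp
        then show ?thesis using e by (simp add: ff_def field_simps)
      qed
    qed simp
    then show ?thesis by (simp add: B_def sum_divide_distrib)
  qed
  have dec: "(\<Sum>v\<in>V-{u}. dB_rep V w {u} r v u) = 1 / N"
  proof -
    have du: "(\<Sum>z\<in>V. fit {u} r z * w z u) = wdeg V w u"
      using dB_den[OF g u u, of r] wg_diag[OF g, of u] by simp
    have "(\<Sum>v\<in>V-{u}. dB_rep V w {u} r v u) = (\<Sum>v\<in>V-{u}. 1 / N / wdeg V w u * w u v)"
      unfolding dB_rep_def du
      by (rule sum.cong) (auto simp: N_def fit_def wg_sym[OF g, of _ u])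
    also have "\<dots> = 1 / N / wdeg V w u * (\<Sum>v\<in>V-{u}. w u v)"
      by (rule sum_distrib_left[symmetric])
    also have "\<dots> = 1 / N" using d by (simp add: deg_rm[OF g u])
    finally show ?thesis .
  qed
  have "gamma_dB V w r u = (B/N) / (B/N + 1/N)"
    unfolding gamma_def Let_def inc dec by simp
  also have "\<dots> = B / (B + 1)" using N by (simp add: field_simps add_divide_distrib[symmetric])
  finally show ?thesis unfolding B_def .
qed

lemma ff_nn: "r \<ge> 1 \<Longrightarrow> x \<ge> 0 \<Longrightarrow> ff r x \<ge> 0"
  unfolding ff_def by simp

lemma tangent_id:
  fixes a c x :: real
  assumes p1: "1 + a * c > 0" and p2: "1 + a*x > 0"
  shows "(a+1) * c / (1 + a * c) + (a+1) / (1 + a * c)^2 * (x - c) - (a+1)*x/(1+a*x)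
        = (a+1) * a * (x - c)^2 / ((1 + a * c)^2 * (1 + a * x))"
  using p1 p2 apply (simp add: divide_simps power2_eq_square)
  by algebra

lemma ff_tangent:
  assumes r: "r \<ge> 1" and x: "x \<ge> 0" and c: "c > 0"
  shows "ff r x \<le> ff r c + r / (1 + (r - 1) * c)^2 * (x - c)"
proof -
  have p1: "1 + (r - 1) * c > 0" using r c by (simp add: add_pos_nonneg)
  have p2: "1 + (r - 1) * x > 0" using r x by (simp add: add_pos_nonneg)
  have "ff r c + r / (1 + (r - 1) * c)^2 * (x - c) - ff r x
        = r * (r - 1) * (x - c)^2 / ((1 + (r - 1) * c)^2 * (1 + (r - 1) * x))"
    using tangent_id[OF p1 p2] unfolding ff_def by simp
  also have "\<dots> \<ge> 0" using r p1 p2 by simp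
  finally show ?thesis by simp
qed

lemma complete_wg: "finite V \<Longrightarrow> wgraph V (complete_w V)"
  unfolding wgraph_def complete_w_def by (auto split: if_splits)

lemma complete_deg:
  assumes "finite V" "v \<in> V"
  shows "wdeg V (complete_w V) v = real (card V) - 1"
proof -
  have "wdeg V (complete_w V) v = complete_w V v v + (\<Sum>y\<in>V-{v}. complete_w V v y)"
    unfolding wdeg_def using sum.remove[OF assms] by blast
  also have "(\<Sum>y\<in>V-{v}. complete_w V v y) = (\<Sum>y\<in>V-{v}. 1)"
    by (rule sum.cong) (auto simp: complete_w_def assms)
  also have "complete_w V v v = 0" by (simp add: complete_w_def)
  finally have "wdeg V (complete_w V) v = (\<Sum>y\<in>V-{v}. 1)" by simp
  moreover have "card V \<ge> 1" using assms by (simp add: Suc_le_eq card_gt_0_iff) blast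
  ultimately show ?thesis using assms by (simp add: card_Diff_singleton of_nat_diff)
qed

lemma deg_pos:
  assumes g: "wgraph V w" and c: "connected_wgraph V w" and n: "card V \<ge> 2" and u: "u \<in> V"
  shows "wdeg V w u > 0"
proof -
  have "\<exists>y\<in>V. y \<noteq> u"
  proof (rule ccontr)
    assume "\<not> ?thesis"
    then have "V \<subseteq> {u}" by blast
    then have "card V \<le> 1" using card_mono[of "{u}" V] by simp
    then show False using n by simp
  qed
  then obtain y where y: "y \<in> V" "y \<noteq> u" by blast
  have "(u, y) \<in> {(a, b). w a b > 0}\<^sup>*" using c u y unfolding connected_wgraph_def by blast
  then obtain z where "(u, z) \<in> {(a, b). w a b > 0}"
    using y(2) by (cases rule: converse_rtranclE) auto
  then have wz: "w u z > 0" by simp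
  have "w z u \<le> wdeg V w u" using deg_ge[OF g u] .
  then show ?thesis using wz wg_sym[OF g, of u z] by simp
qed

theorem theorem2:
  fixes V :: "'a set" and w :: "'a \<Rightarrow> 'a \<Rightarrow> real" and u :: 'a and r :: real
  assumes "wgraph V w" and "connected_wgraph V w" and "card V \<ge> 2"
    and "u \<in> V" and "r \<ge> 1"
  shows "gamma_Bd V w r u < gamma_Bd V (complete_w V) r u
       \<or> gamma_dB V w r u < gamma_dB V (complete_w V) r u
       \<or> (gamma_Bd V w r u = gamma_Bd V (complete_w V) r u
          \<and> gamma_dB V w r u = gamma_dB V (complete_w V) r u)"
proof -
  note g = assms(1) and u = assms(4) and r = assms(5)
  have fin: "finite V" using wg_fin[OF g] .
  define n where "n = real (card V) - 1"
  have n1: "n \<ge> 1" using assms(3) unfolding n_def by simp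
  have cn: "real (card (V - {u})) = n" unfolding n_def using fin u
    using assms(3) by (simp add: card_Diff_singleton of_nat_diff)
  define c where "c = 1 / n"
  have c: "c > 0" using n1 unfolding c_def by simp
  define x where "x v = w u v / wdeg V w v" for v
  define A where "A = (\<Sum>v\<in>V-{u}. x v)"
  define B where "B = (\<Sum>v\<in>V-{u}. ff r (x v))"
  define k where "k = r / (1 + (r - 1) * c)^2"
  define BK where "BK = n * ff r c"
  have xnn: "x v \<ge> 0" for v unfolding x_def using wg_nn[OF g]
    by (simp add: wdeg_def sum_nonneg)
  have A0: "A \<ge> 0" unfolding A_def by (rule sum_nonneg) (simp add: xnn)
  have B0: "B \<ge> 0" unfolding B_def by (rule sum_nonneg) (simp add: xnn ff_nn r)
  have "(r - 1) * c \<ge> 0" using r c by simp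
  then have "1 + (r - 1) * c > 0" by linarith
  then have k: "k > 0" unfolding k_def using r by simp
  have dK: "wdeg V (complete_w V) v = n" if "v \<in> V" for v
    using complete_deg[OF fin that] n_def by simp
  have gw: "wgraph V (complete_w V)" using complete_wg[OF fin] .
  have dKu: "wdeg V (complete_w V) u > 0" using dK[OF u] n1 by simp
  have xK: "complete_w V u v / wdeg V (complete_w V) v = c" if "v \<in> V - {u}" for v
    using that dK[of v] u by (auto simp add: complete_w_def c_def)
  have BdK: "gamma_Bd V (complete_w V) r u = r / (r + 1)"
  proof -
    have "(\<Sum>v\<in>V-{u}. complete_w V u v / wdeg V (complete_w V) v) = (\<Sum>v\<in>V-{u}. c)"
      by (rule sum.cong) (simp_all add: xK)
    also have "\<dots> = 1" using cn n1 by (simp add: c_def)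
    finally show ?thesis using Bd_form[OF gw u dKu r] by simp
  qed
  have dBK: "gamma_dB V (complete_w V) r u = BK / (BK + 1)"
  proof -
    have "(\<Sum>v\<in>V-{u}. ff r (complete_w V u v / wdeg V (complete_w V) v)) = (\<Sum>v\<in>V-{u}. ff r c)"
      by (rule sum.cong) (simp_all add: xK)
    also have "\<dots> = BK" using cn by (simp add: BK_def)
    finally show ?thesis using dB_form[OF gw u dKu r] by simp
  qed
  have dpos: "wdeg V w u > 0" using deg_pos[OF g assms(2) assms(3) u] .
  have Bdw: "gamma_Bd V w r u = r / (r + A)" using Bd_form[OF g u dpos r] unfolding A_def x_def .
  have dBw: "gamma_dB V w r u = B / (B + 1)" using dB_form[OF g u dpos r] unfolding B_def x_def .
  have "B \<le> (\<Sum>v\<in>V-{u}. ff r c + k * (x v - c))"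
    unfolding B_def k_def by (rule sum_mono) (rule ff_tangent[OF r xnn c])
  also have "\<dots> = n * ff r c + k * (A - n * c)"
    by (simp add: sum.distrib sum_subtractf sum_distrib_left[symmetric] A_def cn algebra_simps)
  also have "n * c = 1" using n1 by (simp add: c_def)
  finally have key: "B \<le> BK + k * (A - 1)" unfolding BK_def by simp
  have r0: "r > 0" using r by simp
  have BK0: "BK \<ge> 0" unfolding BK_def using n1 ff_nn[OF r, of c] c by simp
  consider "A > 1" | "A < 1" | "A = 1" by linarith
  then show ?thesis
  proof cases
    case 1
    then have "r / (r + A) < r / (r + 1)" using r0 by (intro divide_strict_left_mono) auto
    then show ?thesis using Bdw BdK by simp
  next
    case 2
    then have "k * (A - 1) < 0" using k by (simp add: mult_pos_neg)
    then have "B < BK" using key by simp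
    then have "B / (B + 1) < BK / (BK + 1)" using B0 by (simp add: field_simps)
    then show ?thesis using dBw dBK by simp
  next
    case 3
    then have "B \<le> BK" using key by simp
    then consider "B < BK" | "B = BK" by linarith
    then show ?thesis
    proof cases
      case 1
      then have "B / (B + 1) < BK / (BK + 1)" using B0 by (simp add: field_simps)
      then show ?thesis using dBw dBK by simp
    next
      case 2
      then show ?thesis using dBw dBK Bdw BdK 3 by simp
    qed
  qed
qed

end
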